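(* Let $M,N,m,n$ be integers with $0\le m\le M$, $0\le n\le N$, let $\bm A$ be a real $2^m\times 2^n$ matrix and $\bm B$ a real $2^{M-m}\times 2^{N-n}$ matrix. Then for any integers $m',n'$ with $0\le m'\le M$, $0\le n'\le N$, $$\|\mathcal R_{m',n'}[\bm A\otimes\bm B]\|_S=\|\mathcal R_{m\wedge m',\,n\wedge n'}[\bm A]\|_S\cdot\|\mathcal R_{(m'-m)_+,\,(n'-n)_+}[\bm B]\|_S.$$
   Context: $\|\cdot\|_S$ is the spectral norm; $x_+=\max\{x,0\}$, $a\wedge b=\min\{a,b\}$. For a $p\times q$ matrix, $\mathrm{vec}$ stacks its rows into a $pq$-vector. Rearrangement: for a $2^a\times 2^b$ matrix $\bm C$ and integers $0\le k\le a$, $0\le l\le b$, view $\bm C$ as a $2^k\times 2^l$ array of blocks $\bm C_{i,j}$ each of size $2^{a-k}\times 2^{b-l}$; $\mathcal R_{k,l}[\bm C]$ is the $2^{k+l}\times 2^{a+b-k-l}$ matrix whose rows are $\mathrm{vec}(\bm C_{1,1})',\dots,\mathrm{vec}(\bm C_{1,2^l})',\dots,\mathrm{vec}(\bm C_{2^k,2^l})'$ (blocks in row-major order). Here $\bm A\otimes\bm B$ is $2^M\times 2^N$. *)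

theory Defs
  imports Complex_Main "Jordan_Normal_Form.Matrix"
begin

definition kron :: "real mat \<Rightarrow> real mat \<Rightarrow> real mat" where
  "kron A B = mat (dim_row A * dim_row B) (dim_col A * dim_col B)
     (\<lambda>(i, j). A $$ (i div dim_row B, j div dim_col B) * B $$ (i mod dim_row B, j mod dim_col B))"

text \<open>Rearrangement R_{k,l}[C]: C viewed as a 2^k x 2^l array of blocks C_{i,j} of size p x q
  (p = dim_row C / 2^k, q = dim_col C / 2^l); row number i*2^l + j of the result is
  vec(C_{i,j}), where vec stacks the rows, so its entry number r*q + c is C_{i,j}(r,c).\<close>
definition rearr :: "nat \<Rightarrow> nat \<Rightarrow> real mat \<Rightarrow> real mat" where
  "rearr k l C = (let p = dim_row C div 2 ^ k; q = dim_col C div 2 ^ l in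
     mat (2 ^ (k + l)) (p * q)
       (\<lambda>(t, u). C $$ ((t div 2 ^ l) * p + u div q, (t mod 2 ^ l) * q + u mod q)))"

definition vnorm :: "real vec \<Rightarrow> real" where
  "vnorm v = sqrt (\<Sum>i<dim_vec v. (v $ i)\<^sup>2)"

definition spec_norm :: "real mat \<Rightarrow> real" where
  "spec_norm A = Sup {vnorm (A *\<^sub>v x) | x. x \<in> carrier_vec (dim_col A) \<and> vnorm x = 1}"

end

theory Submission imports Defs begin

definition ssq :: "real mat \<Rightarrow> (nat \<Rightarrow> real) \<Rightarrow> real" where
  "ssq C f = (\<Sum>i<dim_row C. (\<Sum>j<dim_col C. C $$ (i,j) * f j)\<^sup>2)"

definition nsq :: "nat \<Rightarrow> (nat \<Rightarrow> real) \<Rightarrow> real" where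
  "nsq n f = (\<Sum>j<n. (f j)\<^sup>2)"

lemma nsq_nonneg: "nsq n f \<ge> 0" unfolding nsq_def by (simp add: sum_nonneg)
lemma ssq_nonneg: "ssq C f \<ge> 0" unfolding ssq_def by (simp add: sum_nonneg)

lemma vnorm_mult: "x \<in> carrier_vec (dim_col C) \<Longrightarrow> vnorm (C *\<^sub>v x) = sqrt (ssq C (\<lambda>j. x $ j))"
  unfolding vnorm_def ssq_def
  by (auto simp: scalar_prod_def lessThan_atLeast0 intro!: sum.cong arg_cong[where f=sqrt])

lemma vnorm_vec: "vnorm (vec n f) = sqrt (nsq n f)"
  unfolding vnorm_def nsq_def by simp

lemma ssq_cong: "(\<And>j. j < dim_col C \<Longrightarrow> f j = g j) \<Longrightarrow> ssq C f = ssq C g"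
  unfolding ssq_def by (auto intro!: sum.cong)

lemma ssq_scale: "ssq C (\<lambda>j. f j / s) = ssq C f / s\<^sup>2"
  unfolding ssq_def by (simp add: sum_divide_distrib[symmetric] power_divide)

lemma nsq_scale: "nsq n (\<lambda>j. f j / s) = nsq n f / s\<^sup>2"
  unfolding nsq_def by (simp add: power_divide sum_divide_distrib)

lemma unit_exists: assumes "n > 0" shows "\<exists>x. x \<in> carrier_vec n \<and> vnorm x = 1"
proof -
  let ?x = "vec n (\<lambda>j. if j = 0 then 1 else 0) :: real vec"
  have e: "\<And>j. (if j = 0 then 1 else 0::real)\<^sup>2 = (if j = 0 then 1 else 0)" by simp
  have "nsq n (\<lambda>j. if j = 0 then 1 else 0) = 1"
    unfolding nsq_def e using assms by simp
  then show ?thesis by (intro exI[of _ ?x]) (simp add: vnorm_vec)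
qed

lemma ssq_bound_unit:
  assumes "nsq (dim_col C) f = 1"
  shows "ssq C f \<le> (\<Sum>i<dim_row C. (\<Sum>j<dim_col C. \<bar>C $$ (i,j)\<bar>)\<^sup>2)"
proof -
  have fj: "\<bar>f j\<bar> \<le> 1" if "j < dim_col C" for j
  proof -
    have "(f j)\<^sup>2 \<le> nsq (dim_col C) f" unfolding nsq_def
      using that by (intro member_le_sum) auto
    then have "(f j)\<^sup>2 \<le> 1\<^sup>2" using assms by simp
    then show ?thesis using abs_le_square_iff[of "f j" 1] by simp
  qed
  have "\<bar>\<Sum>j<dim_col C. C $$ (i,j) * f j\<bar> \<le> (\<Sum>j<dim_col C. \<bar>C $$ (i,j)\<bar>)" for i
  proof -
    have "\<bar>\<Sum>j<dim_col C. C $$ (i,j) * f j\<bar> \<le> (\<Sum>j<dim_col C. \<bar>C $$ (i,j) * f j\<bar>)"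
      by (rule sum_abs)
    also have "\<dots> \<le> (\<Sum>j<dim_col C. \<bar>C $$ (i,j)\<bar>)"
      using fj by (intro sum_mono) (auto simp: abs_mult intro: mult_left_le)
    finally show ?thesis .
  qed
  moreover have "(\<Sum>j<dim_col C. \<bar>C $$ (i,j)\<bar>) \<ge> 0" for i by (simp add: sum_nonneg)
  ultimately have "(\<Sum>j<dim_col C. C $$ (i,j) * f j)\<^sup>2 \<le> (\<Sum>j<dim_col C. \<bar>C $$ (i,j)\<bar>)\<^sup>2" for i
    using abs_le_square_iff[of "\<Sum>j<dim_col C. C $$ (i,j) * f j" "\<Sum>j<dim_col C. \<bar>C $$ (i,j)\<bar>"]
    by simp
  then show ?thesis unfolding ssq_def by (intro sum_mono) auto
qed

lemma spec_set_eq: "{vnorm (C *\<^sub>v x) | x. x \<in> carrier_vec (dim_col C) \<and> vnorm x = 1}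
   = {sqrt (ssq C f) | f. nsq (dim_col C) f = 1}" (is "?L = ?R")
proof
  show "?L \<subseteq> ?R"
  proof
    fix y assume "y \<in> ?L"
    then obtain x where x: "x \<in> carrier_vec (dim_col C)" "vnorm x = 1" "y = vnorm (C *\<^sub>v x)" by auto
    have "vnorm x = sqrt (nsq (dim_col C) (\<lambda>j. x $ j))" unfolding vnorm_def nsq_def using x by simp
    then have "nsq (dim_col C) (\<lambda>j. x $ j) = 1" using x(2) nsq_nonneg by (metis real_sqrt_eq_1_iff)
    then show "y \<in> ?R" using x vnorm_mult by auto
  qed
next
  show "?R \<subseteq> ?L"
  proof
    fix y assume "y \<in> ?R"
    then obtain f where f: "nsq (dim_col C) f = 1" "y = sqrt (ssq C f)" by auto
    let ?x = "vec (dim_col C) f"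
    have "vnorm (C *\<^sub>v ?x) = sqrt (ssq C f)" by (simp add: vnorm_mult cong: ssq_cong)
    moreover have "vnorm ?x = 1" using f by (simp add: vnorm_vec)
    ultimately show "y \<in> ?L" using f by force
  qed
qed

lemma spec_norm_alt: "spec_norm C = Sup {sqrt (ssq C f) | f. nsq (dim_col C) f = 1}"
  unfolding spec_norm_def spec_set_eq ..

lemma spec_bdd: "bdd_above {sqrt (ssq C f) | f. nsq (dim_col C) f = 1}"
  using ssq_bound_unit by (intro bdd_aboveI[of _ "sqrt (\<Sum>i<dim_row C. (\<Sum>j<dim_col C. \<bar>C $$ (i,j)\<bar>)\<^sup>2)"]) auto

lemma spec_ne: "dim_col C > 0 \<Longrightarrow> {sqrt (ssq C f) | f. nsq (dim_col C) f = 1} \<noteq> {}"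
  using unit_exists[of "dim_col C"] spec_set_eq[of C] by blast

lemma spec_upper:
  assumes "dim_col C > 0" "K \<ge> 0" "\<And>f. ssq C f \<le> K * nsq (dim_col C) f"
  shows "(spec_norm C)\<^sup>2 \<le> K"
proof -
  have "spec_norm C \<le> sqrt K" unfolding spec_norm_alt
  proof (rule cSup_least)
    show "{sqrt (ssq C f) |f. nsq (dim_col C) f = 1} \<noteq> {}" by (rule spec_ne[OF assms(1)])
    fix x assume "x \<in> {sqrt (ssq C f) |f. nsq (dim_col C) f = 1}"
    then obtain f where f: "nsq (dim_col C) f = 1" "x = sqrt (ssq C f)" by blast
    have "ssq C f \<le> K" using assms(3)[of f] f(1) by simp
    then show "x \<le> sqrt K" unfolding f(2) by (rule real_sqrt_le_mono)
  qed
  moreover have "spec_norm C \<ge> 0"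
  proof -
    obtain x where x: "x \<in> {sqrt (ssq C f) |f. nsq (dim_col C) f = 1}" using spec_ne[OF assms(1)] by blast
    then have "x \<ge> 0" by (auto simp: ssq_nonneg)
    also have "x \<le> spec_norm C" unfolding spec_norm_alt using x spec_bdd by (rule cSup_upper)
    finally show ?thesis .
  qed
  ultimately have "(spec_norm C)\<^sup>2 \<le> (sqrt K)\<^sup>2" by (rule power_mono)
  then show ?thesis using assms(2) by simp
qed

lemma spec_nonneg: assumes "dim_col C > 0" shows "spec_norm C \<ge> 0"
proof -
  obtain x where x: "x \<in> {sqrt (ssq C f) |f. nsq (dim_col C) f = 1}" using spec_ne[OF assms(1)] by blast
  then have "x \<ge> 0" by (auto simp: ssq_nonneg)
  also have "x \<le> spec_norm C" unfolding spec_norm_alt using x spec_bdd by (rule cSup_upper)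
  finally show ?thesis .
qed

lemma spec_lower:
  assumes "dim_col C > 0"
  shows "ssq C f \<le> (spec_norm C)\<^sup>2 * nsq (dim_col C) f"
proof (cases "nsq (dim_col C) f = 0")
  case True
  then have "\<And>j. j < dim_col C \<Longrightarrow> f j = 0" unfolding nsq_def
    by (simp add: sum_nonneg_eq_0_iff)
  then have "ssq C f = ssq C (\<lambda>_. 0)" by (rule ssq_cong)
  then show ?thesis using True by (simp add: ssq_def)
next
  case False
  define s where "s = sqrt (nsq (dim_col C) f)"
  have s2: "s\<^sup>2 = nsq (dim_col C) f" unfolding s_def using nsq_nonneg[of "dim_col C" f] by simp
  have s1: "s > 0" unfolding s_def using False nsq_nonneg[of "dim_col C" f] by (simp add: less_le)
  note s = s1 s2
  have "nsq (dim_col C) (\<lambda>j. f j / s) = 1" using s False by (simp add: nsq_scale)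
  then have "sqrt (ssq C (\<lambda>j. f j / s)) \<le> spec_norm C"
    unfolding spec_norm_alt by (intro cSup_upper spec_bdd) auto
  then have "sqrt (ssq C f / s\<^sup>2) \<le> spec_norm C" by (simp add: ssq_scale)
  then have "(sqrt (ssq C f / s\<^sup>2))\<^sup>2 \<le> (spec_norm C)\<^sup>2" by (rule power_mono) (simp add: ssq_nonneg)
  then have "ssq C f / s\<^sup>2 \<le> (spec_norm C)\<^sup>2" by (simp add: ssq_nonneg)
  moreover have pos: "nsq (dim_col C) f > 0" using False nsq_nonneg[of "dim_col C" f] by (simp add: less_le)
  ultimately show ?thesis unfolding s(2) by (simp add: divide_le_eq mult.commute)
qed


lemma dm: assumes "b < (m::nat)" shows "(a*m+b) div m = a" "(a*m+b) mod m = b"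
  using assms by auto

lemma lt_mix: assumes "a < (n::nat)" "b < m" shows "a*m+b < n*m"
proof -
  have "a*m+b < a*m+m" using assms by simp
  also have "\<dots> = Suc a * m" by simp
  also have "\<dots> \<le> n*m" using assms by (intro mult_right_mono) auto
  finally show ?thesis .
qed

lemma sum_split: "(\<Sum>J<(n::nat)*m. F J) = (\<Sum>a<n. \<Sum>b<m. F (a*m+b))"
proof (induction n)
  case 0 then show ?case by simp
next
  case (Suc n)
  have e: "{..<Suc n * m} = {..<n*m} \<union> {n*m..<n*m+m}" by auto
  have "(\<Sum>J\<in>{n*m..<n*m+m}. F J) = (\<Sum>b<m. F (n*m+b))"
  proof -
    have "(\<Sum>J\<in>{0+n*m..<m+n*m}. F J) = (\<Sum>b\<in>{0..<m}. F (b+n*m))"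
      by (rule sum.shift_bounds_nat_ivl)
    then show ?thesis by (simp add: add.commute lessThan_atLeast0)
  qed
  then show ?case unfolding e using Suc by (subst sum.union_disjoint) auto
qed

lemma spec_perm_le:
  assumes C: "C \<in> carrier_mat rc cc" and D: "D \<in> carrier_mat rd cd" and pos: "cc > 0" "cd > 0"
    and f: "bij_betw f {..<rc} {..<rd}" and g: "bij_betw g {..<cc} {..<cd}"
    and e: "\<And>i j. i < rc \<Longrightarrow> j < cc \<Longrightarrow> C $$ (i,j) = D $$ (f i, g j)"
  shows "spec_norm C \<le> spec_norm D"
proof -
  define gi where "gi = inv_into {..<cc} g"
  have gi: "\<And>j. j < cc \<Longrightarrow> gi (g j) = j" unfolding gi_def
    using g by (simp add: bij_betw_inv_into_left)
  have "(spec_norm C)\<^sup>2 \<le> (spec_norm D)\<^sup>2"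
  proof (rule spec_upper)
    show "dim_col C > 0" using C pos by simp
    show "(spec_norm D)\<^sup>2 \<ge> 0" by simp
    fix h
    have "ssq C h = (\<Sum>i<rc. (\<Sum>j<cc. D $$ (f i, g j) * (\<lambda>j'. h (gi j')) (g j))\<^sup>2)"
      unfolding ssq_def using C e gi by (auto intro!: sum.cong)
    also have "\<dots> = (\<Sum>i<rc. (\<lambda>i'. (\<Sum>j<cd. D $$ (i', j) * h (gi j))\<^sup>2) (f i))"
      by (intro sum.cong refl arg_cong[where f="\<lambda>x. x\<^sup>2"] sum.reindex_bij_betw[OF g])
    also have "\<dots> = (\<Sum>i<rd. (\<Sum>j<cd. D $$ (i, j) * h (gi j))\<^sup>2)"
      by (rule sum.reindex_bij_betw[OF f])
    also have "\<dots> = ssq D (\<lambda>j. h (gi j))"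
      unfolding ssq_def using D by simp
    finally have 1: "ssq C h = ssq D (\<lambda>j. h (gi j))" .
    have "nsq cc h = (\<Sum>j<cc. (\<lambda>j'. (h (gi j'))\<^sup>2) (g j))" unfolding nsq_def using gi by simp
    also have "\<dots> = nsq cd (\<lambda>j. h (gi j))" unfolding nsq_def by (rule sum.reindex_bij_betw[OF g])
    finally have 2: "nsq cc h = nsq cd (\<lambda>j. h (gi j))" .
    show "ssq C h \<le> (spec_norm D)\<^sup>2 * nsq (dim_col C) h"
      unfolding 1 using C D 2 spec_lower[of D] pos by simp
  qed
  then show ?thesis using spec_nonneg[of D] D pos by (simp add: power2_le_iff_abs_le)
qed

lemma spec_perm:
  assumes C: "C \<in> carrier_mat rc cc" and D: "D \<in> carrier_mat rd cd" and pos: "cc > 0" "cd > 0"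
    and f: "bij_betw f {..<rc} {..<rd}" and g: "bij_betw g {..<cc} {..<cd}"
    and e: "\<And>i j. i < rc \<Longrightarrow> j < cc \<Longrightarrow> C $$ (i,j) = D $$ (f i, g j)"
  shows "spec_norm C = spec_norm D"
proof (rule antisym)
  show "spec_norm C \<le> spec_norm D" by (rule spec_perm_le[OF C D pos f g e])
  define fi where "fi = inv_into {..<rc} f"
  define gi where "gi = inv_into {..<cc} g"
  have fi: "bij_betw fi {..<rd} {..<rc}" unfolding fi_def using f by (rule bij_betw_inv_into)
  have gi: "bij_betw gi {..<cd} {..<cc}" unfolding gi_def using g by (rule bij_betw_inv_into)
  have "D $$ (i,j) = C $$ (fi i, gi j)" if "i < rd" "j < cd" for i j
  proof -
    have "f (fi i) = i" unfolding fi_def using f that by (simp add: bij_betw_inv_into_right)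
    moreover have "g (gi j) = j" unfolding gi_def using g that by (simp add: bij_betw_inv_into_right)
    moreover have "fi i < rc" "gi j < cc" using fi gi that by (auto simp: bij_betw_def)
    ultimately show ?thesis using e by metis
  qed
  then show "spec_norm D \<le> spec_norm C" by (rule spec_perm_le[OF D C pos(2,1) fi gi])
qed


lemma kron_carrier: "kron X Y \<in> carrier_mat (dim_row X * dim_row Y) (dim_col X * dim_col Y)"
  unfolding kron_def by simp

lemma kron_idx:
  assumes "i < dim_row X" "k < dim_row Y" "a < dim_col X" "b < dim_col Y"
  shows "kron X Y $$ (i * dim_row Y + k, a * dim_col Y + b) = X $$ (i,a) * Y $$ (k,b)"
  unfolding kron_def using assms by (simp add: lt_mix dm)

lemma ssq_kron:
  "ssq (kron X Y) v = (\<Sum>i<dim_row X. \<Sum>k<dim_row Y.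
      (\<Sum>a<dim_col X. \<Sum>b<dim_col Y. X $$ (i,a) * Y $$ (k,b) * v (a * dim_col Y + b))\<^sup>2)"
  unfolding ssq_def using kron_carrier[of X Y]
  by (simp add: sum_split kron_idx)

lemma nsq_split: "nsq (n*m) v = (\<Sum>a<n. nsq m (\<lambda>b. v (a*m+b)))"
  unfolding nsq_def by (rule sum_split)

lemma kron_upper:
  assumes c: "dim_col X > 0" "dim_col Y > 0"
  shows "ssq (kron X Y) v \<le> ((spec_norm X)\<^sup>2 * (spec_norm Y)\<^sup>2) * nsq (dim_col X * dim_col Y) v"
proof -
  define V where "V a b = v (a * dim_col Y + b)" for a b
  define W where "W a k = (\<Sum>b<dim_col Y. Y $$ (k,b) * V a b)" for a k
  have inner: "(\<Sum>a<dim_col X. \<Sum>b<dim_col Y. X $$ (i,a) * Y $$ (k,b) * v (a * dim_col Y + b))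
     = (\<Sum>a<dim_col X. X $$ (i,a) * W a k)" for i k
    unfolding W_def V_def by (simp add: sum_distrib_left mult.assoc)
  have "ssq (kron X Y) v = (\<Sum>i<dim_row X. \<Sum>k<dim_row Y. (\<Sum>a<dim_col X. X $$ (i,a) * W a k)\<^sup>2)"
    unfolding ssq_kron inner ..
  also have "\<dots> = (\<Sum>k<dim_row Y. ssq X (\<lambda>a. W a k))"
    unfolding ssq_def by (rule sum.swap)
  also have "\<dots> \<le> (\<Sum>k<dim_row Y. (spec_norm X)\<^sup>2 * nsq (dim_col X) (\<lambda>a. W a k))"
    by (intro sum_mono spec_lower c)
  also have "\<dots> = (spec_norm X)\<^sup>2 * (\<Sum>a<dim_col X. ssq Y (V a))"
    unfolding nsq_def ssq_def W_def by (simp add: sum_distrib_left sum.swap[of _ "{..<dim_row Y}"])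
  also have "\<dots> \<le> (spec_norm X)\<^sup>2 * (\<Sum>a<dim_col X. (spec_norm Y)\<^sup>2 * nsq (dim_col Y) (V a))"
    by (intro mult_left_mono sum_mono spec_lower c) simp
  also have "\<dots> = ((spec_norm X)\<^sup>2 * (spec_norm Y)\<^sup>2) * nsq (dim_col X * dim_col Y) v"
    unfolding nsq_split V_def by (simp add: sum_distrib_left mult.assoc)
  finally show ?thesis .
qed

lemma kron_lower:
  "ssq (kron X Y) (\<lambda>J. x (J div dim_col Y) * y (J mod dim_col Y)) = ssq X x * ssq Y y"
  "nsq (dim_col X * dim_col Y) (\<lambda>J. x (J div dim_col Y) * y (J mod dim_col Y)) = nsq (dim_col X) x * nsq (dim_col Y) y"
proof -
  have "ssq (kron X Y) (\<lambda>J. x (J div dim_col Y) * y (J mod dim_col Y)) =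
    (\<Sum>i<dim_row X. \<Sum>k<dim_row Y.
      ((\<Sum>a<dim_col X. X $$ (i,a) * x a) * (\<Sum>b<dim_col Y. Y $$ (k,b) * y b))\<^sup>2)"
    unfolding ssq_kron by (intro sum.cong refl) (simp add: dm sum_product mult_ac)
  also have "\<dots> = ssq X x * ssq Y y"
    unfolding ssq_def power_mult_distrib by (rule sum_product[symmetric])
  finally show "ssq (kron X Y) (\<lambda>J. x (J div dim_col Y) * y (J mod dim_col Y)) = ssq X x * ssq Y y" .
  show "nsq (dim_col X * dim_col Y) (\<lambda>J. x (J div dim_col Y) * y (J mod dim_col Y)) = nsq (dim_col X) x * nsq (dim_col Y) y"
    unfolding nsq_split unfolding nsq_def by (simp add: dm power_mult_distrib sum_product)
qed

lemma spec_kron: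
  assumes c: "dim_col X > 0" "dim_col Y > 0"
  shows "spec_norm (kron X Y) = spec_norm X * spec_norm Y"
proof -
  have cK: "dim_col (kron X Y) > 0" using kron_carrier[of X Y] c by simp
  have dK: "dim_col (kron X Y) = dim_col X * dim_col Y" using kron_carrier[of X Y] by simp
  have nX: "spec_norm X \<ge> 0" and nY: "spec_norm Y \<ge> 0" and nK: "spec_norm (kron X Y) \<ge> 0"
    using spec_nonneg c cK by auto
  have "(spec_norm (kron X Y))\<^sup>2 \<le> (spec_norm X)\<^sup>2 * (spec_norm Y)\<^sup>2"
    by (rule spec_upper[OF cK]) (auto simp: dK intro: kron_upper[OF c])
  then have up: "spec_norm (kron X Y) \<le> spec_norm X * spec_norm Y"
    using nX nY by (simp add: power_mult_distrib[symmetric] power2_le_iff_abs_le)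
  let ?k = "(spec_norm (kron X Y))\<^sup>2"
  have key: "ssq X x * ssq Y y \<le> ?k * (nsq (dim_col X) x * nsq (dim_col Y) y)" for x y
    using spec_lower[OF cK, of "\<lambda>J. x (J div dim_col Y) * y (J mod dim_col Y)"]
    unfolding dK kron_lower .
  have step1: "(spec_norm X)\<^sup>2 * ssq Y y \<le> ?k * nsq (dim_col Y) y" for y
  proof (cases "ssq Y y = 0")
    case True then show ?thesis by (simp add: nsq_nonneg)
  next
    case False
    then have p: "ssq Y y > 0" using ssq_nonneg[of Y y] by simp
    have "(spec_norm X)\<^sup>2 \<le> ?k * nsq (dim_col Y) y / ssq Y y"
    proof (rule spec_upper[OF c(1)])
      show "0 \<le> ?k * nsq (dim_col Y) y / ssq Y y" using p by (simp add: nsq_nonneg)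
      fix x
      have "ssq X x * ssq Y y \<le> ?k * nsq (dim_col Y) y * nsq (dim_col X) x"
        using key[of x y] by (simp add: mult_ac)
      then show "ssq X x \<le> ?k * nsq (dim_col Y) y / ssq Y y * nsq (dim_col X) x"
        using p by (simp add: field_simps)
    qed
    then show ?thesis using p by (simp add: field_simps)
  qed
  have "(spec_norm X * spec_norm Y)\<^sup>2 \<le> ?k"
  proof (cases "spec_norm X = 0")
    case True then show ?thesis by simp
  next
    case False
    then have p: "(spec_norm X)\<^sup>2 > 0" by simp
    have "(spec_norm Y)\<^sup>2 \<le> ?k / (spec_norm X)\<^sup>2"
    proof (rule spec_upper[OF c(2)])
      show "0 \<le> ?k / (spec_norm X)\<^sup>2" by simp
      fix y show "ssq Y y \<le> ?k / (spec_norm X)\<^sup>2 * nsq (dim_col Y) y"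
        using step1[of y] p by (simp add: field_simps)
    qed
    then show ?thesis using p by (simp add: field_simps power_mult_distrib)
  qed
  then have "spec_norm X * spec_norm Y \<le> spec_norm (kron X Y)"
    using nK nX nY by (simp add: power2_le_iff_abs_le)
  then show ?thesis using up by simp
qed


definition sh :: "nat \<Rightarrow> nat \<Rightarrow> nat \<Rightarrow> nat \<Rightarrow> nat" where
  "sh \<beta> \<gamma> \<delta> t = ((t div (\<beta>*\<delta>)) div \<gamma> * \<beta> + (t mod (\<beta>*\<delta>)) div \<delta>) * (\<gamma>*\<delta>)
                 + ((t div (\<beta>*\<delta>)) mod \<gamma> * \<delta> + (t mod (\<beta>*\<delta>)) mod \<delta>)"

lemma radix_eq: assumes "(x::nat) < n" "y < n" "a*n + x = b*n + y" shows "a = b" "x = y"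
  using dm[OF assms(1), of a] dm[OF assms(2), of b] assms(3) by metis+

lemma bij_card:
  assumes "inj_on f A" "f ` A \<subseteq> B" "finite B" "card A = card B"
  shows "bij_betw f A B"
  unfolding bij_betw_def using assms card_subset_eq[OF assms(3) assms(2)] card_image[OF assms(1)] by auto

lemma sh_bij:
  assumes pos: "\<alpha> > 0" "\<beta> > 0" "\<gamma> > 0" "\<delta> > 0"
  shows "bij_betw (sh \<beta> \<gamma> \<delta>) {..<\<alpha>*\<gamma>*(\<beta>*\<delta>)} {..<\<alpha>*\<beta>*(\<gamma>*\<delta>)}"
proof (rule bij_card)
  have bd: "\<beta>*\<delta> > 0" "\<gamma>*\<delta> > 0" using pos by auto
  have Y: "(t div (\<beta>*\<delta>)) mod \<gamma> * \<delta> + (t mod (\<beta>*\<delta>)) mod \<delta> < \<gamma>*\<delta>" for t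
    using pos by (intro lt_mix) auto
  have jd: "(t mod (\<beta>*\<delta>)) div \<delta> < \<beta>" for t
    using bd pos by (intro less_mult_imp_div_less) simp
  show "inj_on (sh \<beta> \<gamma> \<delta>) {..<\<alpha>*\<gamma>*(\<beta>*\<delta>)}"
  proof (rule inj_onI)
    fix t t' assume "sh \<beta> \<gamma> \<delta> t = sh \<beta> \<gamma> \<delta> t'"
    then have e: "((t div (\<beta>*\<delta>)) div \<gamma> * \<beta> + (t mod (\<beta>*\<delta>)) div \<delta>) * (\<gamma>*\<delta>)
                 + ((t div (\<beta>*\<delta>)) mod \<gamma> * \<delta> + (t mod (\<beta>*\<delta>)) mod \<delta>) =
         ((t' div (\<beta>*\<delta>)) div \<gamma> * \<beta> + (t' mod (\<beta>*\<delta>)) div \<delta>) * (\<gamma>*\<delta>)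
                 + ((t' div (\<beta>*\<delta>)) mod \<gamma> * \<delta> + (t' mod (\<beta>*\<delta>)) mod \<delta>)"
      unfolding sh_def .
    note r1 = radix_eq[OF Y Y e]
    note r2 = radix_eq[OF jd jd r1(1)]
    note r3 = radix_eq[OF _ _ r1(2)]
    have m1: "(t mod (\<beta>*\<delta>)) mod \<delta> < \<delta>" "(t' mod (\<beta>*\<delta>)) mod \<delta> < \<delta>" using pos by auto
    note r4 = r3[OF m1]
    have "t div (\<beta>*\<delta>) = t' div (\<beta>*\<delta>)"
      by (metis div_mult_mod_eq r2(1) r4(1))
    moreover have "t mod (\<beta>*\<delta>) = t' mod (\<beta>*\<delta>)"
      by (metis div_mult_mod_eq r2(2) r4(2))
    ultimately show "t = t'" by (metis div_mult_mod_eq)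
  qed
  show "sh \<beta> \<gamma> \<delta> ` {..<\<alpha>*\<gamma>*(\<beta>*\<delta>)} \<subseteq> {..<\<alpha>*\<beta>*(\<gamma>*\<delta>)}"
  proof
    fix x assume "x \<in> sh \<beta> \<gamma> \<delta> ` {..<\<alpha>*\<gamma>*(\<beta>*\<delta>)}"
    then obtain t where t: "t < \<alpha>*\<gamma>*(\<beta>*\<delta>)" "x = sh \<beta> \<gamma> \<delta> t" by auto
    have a: "t div (\<beta>*\<delta>) < \<alpha>*\<gamma>" using t(1) less_mult_imp_div_less[of t "\<alpha>*\<gamma>" "\<beta>*\<delta>"] by simp
    have "(t div (\<beta>*\<delta>)) div \<gamma> < \<alpha>" using less_mult_imp_div_less[OF a] .
    then have "(t div (\<beta>*\<delta>)) div \<gamma> * \<beta> + (t mod (\<beta>*\<delta>)) div \<delta> < \<alpha>*\<beta>"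
      using jd by (intro lt_mix)
    from lt_mix[OF this Y[of t]] have "x < \<alpha>*\<beta>*(\<gamma>*\<delta>)" unfolding t(2) sh_def .
    then show "x \<in> {..<\<alpha>*\<beta>*(\<gamma>*\<delta>)}" by simp
  qed
  show "finite {..<\<alpha>*\<beta>*(\<gamma>*\<delta>)}" by simp
  show "card {..<\<alpha>*\<gamma>*(\<beta>*\<delta>)} = card {..<\<alpha>*\<beta>*(\<gamma>*\<delta>)}" by (simp add: mult_ac)
qed


lemma rearr_carrier: "rearr k l C \<in> carrier_mat (2^k*2^l) ((dim_row C div 2^k)*(dim_col C div 2^l))"
  unfolding rearr_def Let_def by (simp add: power_add)

lemma rearr_idx:
  assumes "t < 2^k*2^l" "u < (dim_row C div 2^k)*(dim_col C div 2^l)"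
  shows "rearr k l C $$ (t,u) = C $$ ((t div 2^l)*(dim_row C div 2^k) + u div (dim_col C div 2^l),
                                     (t mod 2^l)*(dim_col C div 2^l) + u mod (dim_col C div 2^l))"
  unfolding rearr_def Let_def using assms by (simp add: power_add)

lemma kron_entry:
  assumes "I < dim_row X * dim_row Y" "J < dim_col X * dim_col Y"
  shows "kron X Y $$ (I,J) = X $$ (I div dim_row Y, J div dim_col Y) * Y $$ (I mod dim_row Y, J mod dim_col Y)"
  unfolding kron_def using assms by simp

lemma digit:
  fixes i r \<alpha> \<gamma> pA pB :: nat
  assumes "r < pA*pB" "\<gamma> = 1 \<or> pA = 1" "pB > 0" "\<gamma> > 0"
  shows "(i*(pA*pB) + r) div (\<gamma>*pB) = (i div \<gamma>)*pA + r div pB"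
        "(i*(pA*pB) + r) mod (\<gamma>*pB) = (i mod \<gamma>)*pB + r mod pB"
proof -
  have "(i*(pA*pB) + r) div (\<gamma>*pB) = (i div \<gamma>)*pA + r div pB \<and>
        (i*(pA*pB) + r) mod (\<gamma>*pB) = (i mod \<gamma>)*pB + r mod pB"
  proof (cases "\<gamma> = 1")
    case True
    have "(i*(pA*pB) + r) div pB = i*pA + r div pB"
      using assms(3) by (simp add: mult.assoc[symmetric])
    moreover have "(i*(pA*pB) + r) mod pB = r mod pB"
      using assms(3) by (simp add: mult.assoc[symmetric])
    ultimately show ?thesis using True by simp
  next
    case False
    then have pA: "pA = 1" using assms(2) by simp
    then have r: "r < pB" using assms(1) by simp
    have d1: "(i*pB + r) div pB = i" using r by simp
    have "(i*pB + r) mod pB = r mod pB" by simp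
    also have "\<dots> = r" using r by (rule mod_less)
    finally have m1: "(i*pB + r) mod pB = r" .
    have "(i*pB + r) div (pB*\<gamma>) = i div \<gamma>" by (simp add: div_mult2_eq d1)
    moreover have "(i*pB + r) mod (pB*\<gamma>) = pB * (i mod \<gamma>) + r" by (simp add: mod_mult2_eq d1 m1 mod_less[OF r])
    ultimately show ?thesis using pA r by (simp add: mult.commute)
  qed
  then show "(i*(pA*pB) + r) div (\<gamma>*pB) = (i div \<gamma>)*pA + r div pB"
        "(i*(pA*pB) + r) mod (\<gamma>*pB) = (i mod \<gamma>)*pB + r mod pB" by auto
qed


lemma main_abs:
  fixes A B :: "real mat"
  assumes A: "A \<in> carrier_mat (\<alpha>*pA) (\<beta>*qA)" and B: "B \<in> carrier_mat (\<gamma>*pB) (\<delta>*qB)"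
    and pos: "\<alpha> > 0" "\<beta> > 0" "\<gamma> > 0" "\<delta> > 0" "pA > 0" "pB > 0" "qA > 0" "qB > 0"
    and e: "2^a = \<alpha>" "2^b = \<beta>" "2^c = \<gamma>" "2^d = \<delta>" "2^m' = \<alpha>*\<gamma>" "2^n' = \<beta>*\<delta>"
    and sp: "\<gamma> = 1 \<or> pA = 1" "\<delta> = 1 \<or> qA = 1"
  shows "spec_norm (rearr m' n' (kron A B)) = spec_norm (rearr a b A) * spec_norm (rearr c d B)"
proof -
  define K where "K = kron A B"
  define RA where "RA = rearr a b A"
  define RB where "RB = rearr c d B"
  define RK where "RK = rearr m' n' K"
  have dA: "dim_row A = \<alpha>*pA" "dim_col A = \<beta>*qA" using A by auto
  have dB: "dim_row B = \<gamma>*pB" "dim_col B = \<delta>*qB" using B by auto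
  have dK: "dim_row K = \<alpha>*pA*(\<gamma>*pB)" "dim_col K = \<beta>*qA*(\<delta>*qB)"
    unfolding K_def using kron_carrier[of A B] dA dB by auto
  have hK1: "dim_row K div 2^m' = pA*pB" unfolding dK e
  proof -
    have "\<alpha>*pA*(\<gamma>*pB) = (\<alpha>*\<gamma>)*(pA*pB)" by (simp add: mult_ac)
    then show "\<alpha>*pA*(\<gamma>*pB) div (\<alpha>*\<gamma>) = pA*pB" using pos by simp
  qed
  have hK2: "dim_col K div 2^n' = qA*qB" unfolding dK e
  proof -
    have "\<beta>*qA*(\<delta>*qB) = (\<beta>*\<delta>)*(qA*qB)" by (simp add: mult_ac)
    then show "\<beta>*qA*(\<delta>*qB) div (\<beta>*\<delta>) = qA*qB" using pos by simp
  qed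
  have hA: "dim_row A div 2^a = pA" "dim_col A div 2^b = qA" unfolding dA e using pos by auto
  have hB: "dim_row B div 2^c = pB" "dim_col B div 2^d = qB" unfolding dB e using pos by auto
  have cRK: "RK \<in> carrier_mat (\<alpha>*\<gamma>*(\<beta>*\<delta>)) (pA*pB*(qA*qB))"
    unfolding RK_def using rearr_carrier[of m' n' K] hK1 hK2 e by simp
  have cRA: "RA \<in> carrier_mat (\<alpha>*\<beta>) (pA*qA)"
    unfolding RA_def using rearr_carrier[of a b A] hA e by simp
  have cRB: "RB \<in> carrier_mat (\<gamma>*\<delta>) (pB*qB)"
    unfolding RB_def using rearr_carrier[of c d B] hB e by simp
  have cKR: "kron RA RB \<in> carrier_mat (\<alpha>*\<beta>*(\<gamma>*\<delta>)) (pA*qA*(pB*qB))"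
    using kron_carrier[of RA RB] cRA cRB by simp
  have entry: "RK $$ (t,u) = kron RA RB $$ (sh \<beta> \<gamma> \<delta> t, sh qA pB qB u)"
    if t: "t < \<alpha>*\<gamma>*(\<beta>*\<delta>)" and u: "u < pA*pB*(qA*qB)" for t u
  proof -
    define i where "i = t div (\<beta>*\<delta>)"
    define j where "j = t mod (\<beta>*\<delta>)"
    define r where "r = u div (qA*qB)"
    define s where "s = u mod (qA*qB)"
    have bi: "i < \<alpha>*\<gamma>" unfolding i_def using t less_mult_imp_div_less[of t "\<alpha>*\<gamma>" "\<beta>*\<delta>"] by simp
    have bj: "j < \<beta>*\<delta>" unfolding j_def using pos by simp
    have br: "r < pA*pB" unfolding r_def using u less_mult_imp_div_less[of u "pA*pB" "qA*qB"] by simp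
    have bs: "s < qA*qB" unfolding s_def using pos by simp
    have bi1: "i div \<gamma> < \<alpha>" using less_mult_imp_div_less[OF bi] .
    have bi2: "i mod \<gamma> < \<gamma>" using pos by simp
    have bj1: "j div \<delta> < \<beta>" using less_mult_imp_div_less[OF bj] .
    have bj2: "j mod \<delta> < \<delta>" using pos by simp
    have br1: "r div pB < pA" using less_mult_imp_div_less[OF br] .
    have br2: "r mod pB < pB" using pos by simp
    have bs1: "s div qB < qA" using less_mult_imp_div_less[OF bs] .
    have bs2: "s mod qB < qB" using pos by simp
    have I: "i*(pA*pB) + r < dim_row A * dim_row B"
      using lt_mix[OF bi br] dA dB by (simp add: mult_ac)
    have J: "j*(qA*qB) + s < dim_col A * dim_col B"
      using lt_mix[OF bj bs] dA dB by (simp add: mult_ac)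
    have "RK $$ (t,u) = K $$ (i*(pA*pB) + r, j*(qA*qB) + s)"
      unfolding RK_def i_def j_def r_def s_def
      using rearr_idx[of t m' n' u K] t u hK1 hK2 e by (simp add: mult_ac)
    also have "\<dots> = A $$ ((i div \<gamma>)*pA + r div pB, (j div \<delta>)*qA + s div qB) *
                    B $$ ((i mod \<gamma>)*pB + r mod pB, (j mod \<delta>)*qB + s mod qB)"
      unfolding K_def kron_entry[OF I J] unfolding dB
      using digit[OF br sp(1) pos(6) pos(3), of i] digit[OF bs sp(2) pos(8) pos(4), of j] by simp
    finally have L: "RK $$ (t,u) = A $$ ((i div \<gamma>)*pA + r div pB, (j div \<delta>)*qA + s div qB) *
                    B $$ ((i mod \<gamma>)*pB + r mod pB, (j mod \<delta>)*qB + s mod qB)" .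
    define TA where "TA = (i div \<gamma>)*\<beta> + j div \<delta>"
    define TB where "TB = (i mod \<gamma>)*\<delta> + j mod \<delta>"
    define UA where "UA = (r div pB)*qA + s div qB"
    define UB where "UB = (r mod pB)*qB + s mod qB"
    have sh1: "sh \<beta> \<gamma> \<delta> t = TA * dim_row RB + TB"
      unfolding sh_def TA_def TB_def i_def j_def using cRB by simp
    have sh2: "sh qA pB qB u = UA * dim_col RB + UB"
      unfolding sh_def UA_def UB_def r_def s_def using cRB by simp
    have bTA: "TA < dim_row RA" unfolding TA_def using lt_mix[OF bi1 bj1] cRA by simp
    have bTB: "TB < dim_row RB" unfolding TB_def using lt_mix[OF bi2 bj2] cRB by simp
    have bUA: "UA < dim_col RA" unfolding UA_def using lt_mix[OF br1 bs1] cRA by simp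
    have bUB: "UB < dim_col RB" unfolding UB_def using lt_mix[OF br2 bs2] cRB by simp
    have RAe: "RA $$ (TA, UA) = A $$ ((i div \<gamma>)*pA + r div pB, (j div \<delta>)*qA + s div qB)"
    proof -
      have "RA $$ (TA, UA) = A $$ ((TA div \<beta>)*pA + UA div qA, (TA mod \<beta>)*qA + UA mod qA)"
        unfolding RA_def using rearr_idx[of TA a b UA A] bTA bUA cRA hA e
        by (simp add: RA_def)
      also have "\<dots> = A $$ ((i div \<gamma>)*pA + r div pB, (j div \<delta>)*qA + s div qB)"
        unfolding TA_def UA_def using dm[OF bj1] dm[OF bs1] by simp
      finally show ?thesis .
    qed
    have RBe: "RB $$ (TB, UB) = B $$ ((i mod \<gamma>)*pB + r mod pB, (j mod \<delta>)*qB + s mod qB)"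
    proof -
      have "RB $$ (TB, UB) = B $$ ((TB div \<delta>)*pB + UB div qB, (TB mod \<delta>)*qB + UB mod qB)"
        unfolding RB_def using rearr_idx[of TB c d UB B] bTB bUB cRB hB e
        by (simp add: RB_def)
      also have "\<dots> = B $$ ((i mod \<gamma>)*pB + r mod pB, (j mod \<delta>)*qB + s mod qB)"
        unfolding TB_def UB_def using dm[OF bj2] dm[OF bs2] by simp
      finally show ?thesis .
    qed
    show ?thesis unfolding L sh1 sh2 kron_idx[OF bTA bTB bUA bUB] RAe RBe ..
  qed
  have "spec_norm RK = spec_norm (kron RA RB)"
    by (rule spec_perm[OF cRK cKR _ _ sh_bij sh_bij entry]) (use pos in auto)
  also have "\<dots> = spec_norm RA * spec_norm RB"
    by (rule spec_kron) (use cRA cRB pos in auto)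
  finally show ?thesis unfolding RK_def RA_def RB_def K_def .
qed


lemma pw: "x + y = z \<Longrightarrow> (2::nat)^x * 2^y = 2^z" by (simp add: power_add[symmetric])

theorem lemma1:
  fixes A B :: "real mat" and M N m n m' n' :: nat
  assumes "m \<le> M" and "n \<le> N"
    and "A \<in> carrier_mat (2 ^ m) (2 ^ n)"
    and "B \<in> carrier_mat (2 ^ (M - m)) (2 ^ (N - n))"
    and "m' \<le> M" and "n' \<le> N"
  shows "spec_norm (rearr m' n' (kron A B)) =
         spec_norm (rearr (min m m') (min n n') A) * spec_norm (rearr (m' - m) (n' - n) B)"
proof (rule main_abs)
  show "A \<in> carrier_mat (2 ^ min m m' * 2 ^ (m - min m m')) (2 ^ min n n' * 2 ^ (n - min n n'))"
    using assms(3) pw[of "min m m'" "m - min m m'" m] pw[of "min n n'" "n - min n n'" n] by simp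
  show "B \<in> carrier_mat (2 ^ (m' - m) * 2 ^ (M - m - (m' - m))) (2 ^ (n' - n) * 2 ^ (N - n - (n' - n)))"
    using assms(4,5,6) pw[of "m' - m" "M - m - (m' - m)" "M - m"] pw[of "n' - n" "N - n - (n' - n)" "N - n"] by simp
  show "(2::nat) ^ m' = 2 ^ min m m' * 2 ^ (m' - m)" using pw[of "min m m'" "m' - m" m'] by simp
  show "(2::nat) ^ n' = 2 ^ min n n' * 2 ^ (n' - n)" using pw[of "min n n'" "n' - n" n'] by simp
  show "2 ^ (m' - m) = 1 \<or> 2 ^ (m - min m m') = (1::nat)" by auto
  show "2 ^ (n' - n) = 1 \<or> 2 ^ (n - min n n') = (1::nat)" by auto
qed auto

end
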